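(* Let $F$ be a field, $n\ge1$, and let $G=\mathrm{Sp}_{2n}(F)$, realized as the subgroup of $\mathrm{SL}_{2n}(F)$ of block matrices $\begin{pmatrix}a&b\\c&d\end{pmatrix}$ ($n\times n$ blocks) with $ad^T-bc^T=1_n$ and $ab^T$, $cd^T$ symmetric. Let $U=\left\{\begin{pmatrix}1&k\\0&1\end{pmatrix}: k\text{ symmetric}\right\}$, $U^T=\left\{\begin{pmatrix}1&0\\k&1\end{pmatrix}: k\text{ symmetric}\right\}$, $H=\left\{\begin{pmatrix}a^{-1}&0\\0&a^T\end{pmatrix}: a\in\mathrm{GL}_n(F)\right\}$. Then $G=U^TUU^TH$. *)

theory Defs
  imports "HOL-Analysis.Analysis"
begin

text \<open>A 2n x 2n matrix is indexed by the sum type 'n + 'n (first block Inl, second block Inr).\<close>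

definition block :: "'a^'n^'n \<Rightarrow> 'a^'n^'n \<Rightarrow> 'a^'n^'n \<Rightarrow> 'a^'n^'n \<Rightarrow> 'a^('n+'n)^('n+'n)" where
  "block a b c d = (\<chi> i j. case i of
      Inl i' \<Rightarrow> (case j of Inl j' \<Rightarrow> a $ i' $ j' | Inr j' \<Rightarrow> b $ i' $ j')
    | Inr i' \<Rightarrow> (case j of Inl j' \<Rightarrow> c $ i' $ j' | Inr j' \<Rightarrow> d $ i' $ j'))"

definition symmetric_mat :: "'a^'n^'n \<Rightarrow> bool" where
  "symmetric_mat k \<longleftrightarrow> transpose k = k"

definition Sp :: "(('a::field)^('n::finite+'n)^('n+'n)) set" where
  "Sp = {M. det M = 1 \<and> (\<exists>a b c d. M = block a b c d \<and>
           a ** transpose d - b ** transpose c = mat 1 \<and>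
           symmetric_mat (a ** transpose b) \<and> symmetric_mat (c ** transpose d))}"

definition U_upper :: "(('a::field)^('n::finite+'n)^('n+'n)) set" where
  "U_upper = {block (mat 1) k 0 (mat 1) | k. symmetric_mat k}"

definition U_lower :: "(('a::field)^('n::finite+'n)^('n+'n)) set" where
  "U_lower = {block (mat 1) 0 k (mat 1) | k. symmetric_mat k}"

definition H_diag :: "(('a::field)^('n::finite+'n)^('n+'n)) set" where
  "H_diag = {block (matrix_inv a) 0 0 (transpose a) | a. invertible a}"

definition set_mat_prod :: "(('a::field)^'m^'m) set \<Rightarrow> ('a^'m^'m) set \<Rightarrow> ('a^'m^'m) set" where
  "set_mat_prod A B = {x ** y | x y. x \<in> A \<and> y \<in> B}"

end

theory Submission
  imports Defs
begin


lemma block_nth [simp]: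
  "block a b c d $ Inl i $ Inl j = a$i$j"
  "block a b c d $ Inl i $ Inr j = b$i$j"
  "block a b c d $ Inr i $ Inl j = c$i$j"
  "block a b c d $ Inr i $ Inr j = d$i$j"
  by (simp_all add: block_def)

lemma block_eq_iff:
  "block a b c d = block a' b' c' d' \<longleftrightarrow> a = a' \<and> b = b' \<and> c = c' \<and> d = d'"
proof
  assume h: "block a b c d = block a' b' c' d'"
  have "\<And>x y. block a b c d $ x $ y = block a' b' c' d' $ x $ y" using h by simp
  then show "a = a' \<and> b = b' \<and> c = c' \<and> d = d'"
    by (metis block_nth vec_eq_iff)
qed simp

lemma block_split: "M = block (\<chi> i j. M $ Inl i $ Inl j) (\<chi> i j. M $ Inl i $ Inr j)
   (\<chi> i j. M $ Inr i $ Inl j) (\<chi> i j. M $ Inr i $ Inr j)"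
  by (simp add: vec_eq_iff block_def split: sum.split)

lemma sum_UNIV_Plus: "sum f (UNIV :: ('n::finite + 'n) set) = sum (f \<circ> Inl) UNIV + sum (f \<circ> Inr) UNIV"
  using sum.Plus[of "UNIV::'n set" "UNIV::'n set" f] by simp

lemma block_mult:
  fixes a b c d a' b' c' d' :: "'a::comm_ring_1^'n::finite^'n"
  shows "block a b c d ** block a' b' c' d' =
    block (a**a' + b**c') (a**b' + b**d') (c**a' + d**c') (c**b' + d**d')"
proof -
  { fix i j
    have "(block a b c d ** block a' b' c' d') $ i $ j =
      block (a**a' + b**c') (a**b' + b**d') (c**a' + d**c') (c**b' + d**d') $ i $ j"
      by (cases i; cases j) (simp_all add: matrix_matrix_mult_def sum_UNIV_Plus) }
  then show ?thesis by (simp add: vec_eq_iff)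
qed

lemma block_mat1: "(mat 1 :: 'a::comm_ring_1^('n::finite+'n)^('n+'n)) = block (mat 1) 0 0 (mat 1)"
  by (simp add: vec_eq_iff mat_def block_def split: sum.split)

lemma transpose_block:
  "transpose (block a b c d) = block (transpose a) (transpose c) (transpose b) (transpose d)"
  by (simp add: vec_eq_iff transpose_def block_def split: sum.split)

lemma block_uminus: "- block a b c d = block (-a) (-b) (-c) (-d)"
  by (simp add: vec_eq_iff block_def split: sum.split)

lemma mm_add_r: "((A::'a::semiring_1^'n^'m) + B) ** C = A ** C + B ** C"
  by (vector matrix_matrix_mult_def sum.distrib[symmetric] field_simps)
lemma mm_diff_l: "(A::'a::ring_1^'n^'m) ** (B - C) = A ** B - A ** C"
  by (vector matrix_matrix_mult_def sum_subtractf[symmetric] field_simps)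
lemma mm_diff_r: "((A::'a::ring_1^'n^'m) - B) ** C = A ** C - B ** C"
  by (vector matrix_matrix_mult_def sum_subtractf[symmetric] field_simps)
lemma mm_neg_l: "(- (A::'a::ring_1^'n^'m)) ** B = - (A ** B)"
  by (vector matrix_matrix_mult_def sum_negf[symmetric])
lemma mm_neg_r: "(A::'a::ring_1^'n^'m) ** (- B) = - (A ** B)"
  by (vector matrix_matrix_mult_def sum_negf[symmetric])
lemma tr_add: "transpose (A + B) = transpose A + transpose B"
  by (simp add: vec_eq_iff transpose_def)
lemma tr_diff: "transpose ((A::'a::ab_group_add^'n^'m) - B) = transpose A - transpose B"
  by (simp add: vec_eq_iff transpose_def)
lemma tr_neg: "transpose (- (A::'a::ab_group_add^'n^'m)) = - transpose A"
  by (simp add: vec_eq_iff transpose_def)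
lemma tr_zero [simp]: "transpose 0 = 0"
  by (simp add: vec_eq_iff transpose_def)




definition Jm :: "('a::comm_ring_1)^('n::finite+'n)^('n+'n)" where
  "Jm = block 0 (mat 1) (- mat 1) 0"

lemma sym_iff: "symmetric_mat ((a::'a::comm_ring_1^'n::finite^'n) ** transpose b) \<longleftrightarrow> b ** transpose a = a ** transpose b"
  by (simp add: symmetric_mat_def matrix_transpose_mul)

lemma sp_cond_J:
  fixes a b c d :: "'a::comm_ring_1^'n::finite^'n"
  shows "block a b c d ** Jm ** transpose (block a b c d) = Jm \<longleftrightarrow>
    (b ** transpose a = a ** transpose b \<and> a ** transpose d - b ** transpose c = mat 1
     \<and> d ** transpose c = c ** transpose d)"
proof -
  have e: "block a b c d ** Jm ** transpose (block a b c d) =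
    block (a ** transpose b - b ** transpose a) (a ** transpose d - b ** transpose c)
          (c ** transpose b - d ** transpose a) (c ** transpose d - d ** transpose c)"
    by (simp add: Jm_def block_mult transpose_block mm_neg_l mm_neg_r)
  have t: "transpose (a ** transpose d - b ** transpose c) = d ** transpose a - c ** transpose b"
    by (simp add: tr_diff matrix_transpose_mul)
  show ?thesis
    unfolding e unfolding Jm_def block_eq_iff
  proof (intro iffI; elim conjE)
    assume h: "a ** transpose d - b ** transpose c = mat 1"
    then have "d ** transpose a - c ** transpose b = mat 1" using t by simp
    then have "c ** transpose b - d ** transpose a = - mat 1"
      by (metis minus_diff_eq)
    moreover assume "b ** transpose a = a ** transpose b" "d ** transpose c = c ** transpose d"
    ultimately show "a ** transpose b - b ** transpose a = 0 \<and>
      a ** transpose d - b ** transpose c = mat 1 \<and>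
      c ** transpose b - d ** transpose a = - mat 1 \<and> c ** transpose d - d ** transpose c = 0"
      using h by simp
  qed auto
qed

lemma Sp_iff:
  "(M :: ('a::field)^('n::finite+'n)^('n+'n)) \<in> Sp \<longleftrightarrow> det M = 1 \<and> M ** Jm ** transpose M = Jm"
proof
  assume "M \<in> Sp"
  then obtain a b c d where "det M = 1" "M = block a b c d"
    "a ** transpose d - b ** transpose c = mat 1" "symmetric_mat (a ** transpose b)"
    "symmetric_mat (c ** transpose d)" unfolding Sp_def by auto
  then show "det M = 1 \<and> M ** Jm ** transpose M = Jm"
    by (simp add: sp_cond_J sym_iff)
next
  assume h: "det M = 1 \<and> M ** Jm ** transpose M = Jm"
  obtain a b c d where M: "M = block a b c d" using block_split by blast
  show "M \<in> Sp" using h unfolding Sp_def M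
    by (auto simp: sp_cond_J sym_iff)
qed

lemma Sp_mult: assumes "M \<in> Sp" "N \<in> Sp" shows "M ** N \<in> Sp"
proof -
  have "(M ** N) ** Jm ** transpose (M ** N) = M ** (N ** Jm ** transpose N) ** transpose M"
    by (simp add: matrix_transpose_mul matrix_mul_assoc)
  also have "\<dots> = Jm" using assms by (simp add: Sp_iff)
  finally show ?thesis using assms by (simp add: Sp_iff det_mul)
qed




lemma prod_UNIV_Plus: "prod f (UNIV :: ('n::finite + 'n) set) = prod (f \<circ> Inl) UNIV * prod (f \<circ> Inr) UNIV"
  using prod.Plus[of "UNIV::'n set" "UNIV::'n set" f] by simp

lemma det_id_perm:
  fixes A :: "'a::comm_ring_1^'m::finite^'m"
  assumes "\<And>p. p permutes UNIV \<Longrightarrow> p \<noteq> id \<Longrightarrow> (\<Prod>i\<in>UNIV. A$i$p i) = 0"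
  shows "det A = (\<Prod>i\<in>UNIV. A$i$i)"
proof -
  have "det A = (\<Sum>p\<in>{p. p permutes UNIV}. of_int (sign p) * (\<Prod>i\<in>UNIV. A$i$p i))"
    by (simp add: det_def)
  also have "\<dots> = of_int (sign (id::'m\<Rightarrow>'m)) * (\<Prod>i\<in>UNIV. A$i$id i)"
    apply (subst sum.remove[of _ id])
    by (auto simp: permutes_id assms intro!: sum.neutral)
  finally show ?thesis by simp
qed

lemma det_L: "det (block (mat 1) 0 k (mat 1) :: 'a::comm_ring_1^('n::finite+'n)^('n+'n)) = 1"
proof -
  let ?M = "block (mat 1) 0 k (mat 1) :: 'a::comm_ring_1^('n::finite+'n)^('n+'n)"
  have "det ?M = (\<Prod>i\<in>UNIV. ?M$i$i)"
  proof (rule det_id_perm)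
    fix p :: "'n+'n \<Rightarrow> 'n+'n" assume p: "p permutes UNIV" "p \<noteq> id"
    show "(\<Prod>i\<in>UNIV. ?M$i$p i) = 0"
    proof (rule ccontr)
      assume "(\<Prod>i\<in>UNIV. ?M$i$p i) \<noteq> 0"
      then have nz: "\<And>i. ?M$i$p i \<noteq> 0" using prod_zero[of UNIV "\<lambda>i. ?M$i$p i"] by auto
      have l: "p (Inl i) = Inl i" for i
      proof (cases "p (Inl i)")
        case (Inl j) then show ?thesis using nz[of "Inl i"] by (auto simp: mat_def split: if_splits)
      next
        case (Inr j) then show ?thesis using nz[of "Inl i"] by auto
      qed
      have r: "p (Inr i) = Inr i" for i
      proof (cases "p (Inr i)")
        case (Inl j) then have "p (Inr i) = p (Inl j)" using l by simp
        then show ?thesis using permutes_inj[OF p(1)] by (auto dest: injD)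
      next
        case (Inr j) then show ?thesis using nz[of "Inr i"] by (auto simp: mat_def split: if_splits)
      qed
      have "p = id" by (rule ext) (metis id_apply l r sum.exhaust)
      with p(2) show False ..
    qed
  qed
  also have "\<dots> = 1" by (simp add: prod_UNIV_Plus o_def mat_def)
  finally show ?thesis .
qed

lemma det_U: "det (block (mat 1) k 0 (mat 1) :: 'a::comm_ring_1^('n::finite+'n)^('n+'n)) = 1"
proof -
  have "block (mat 1) k 0 (mat 1) = transpose (block (mat 1) 0 (transpose k) (mat 1) :: 'a::comm_ring_1^('n::finite+'n)^('n+'n))"
    by (simp add: transpose_block)
  then show ?thesis using det_L by (metis det_transpose)
qed

definition lft :: "('n \<Rightarrow> 'n) \<Rightarrow> ('n + 'n \<Rightarrow> 'n + 'n)" where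
  "lft q = map_permutation UNIV Inl q"

lemma lft_Inl [simp]: "lft q (Inl i) = Inl (q i)"
  unfolding lft_def by (rule map_permutation_apply) auto
lemma lft_Inr [simp]: "lft q (Inr i) = Inr i"
  unfolding lft_def by (auto simp: map_permutation_def restrict_id_def)

lemma lft_permutes: "q permutes (UNIV::'n::finite set) \<Longrightarrow> lft q permutes UNIV"
  unfolding lft_def
  by (rule permutes_subset[OF map_permutation_permutes[of Inl UNIV "range Inl"]]) (auto simp: bij_betw_def)

lemma det_blockdiag1:
  fixes A :: "'a::comm_ring_1^'n::finite^'n"
  shows "det (block A 0 0 (mat 1)) = det A"
proof -
  let ?M = "block A 0 0 (mat 1)"
  let ?f = "\<lambda>p. of_int (sign p) * (\<Prod>i\<in>UNIV. ?M$i$p i)"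
  let ?P = "{p. p permutes (UNIV::('n+'n) set)}"
  let ?Q = "{q. q permutes (UNIV::'n set)}"
  have "det ?M = sum ?f ?P" by (simp add: det_def)
  also have "\<dots> = sum ?f (lft ` ?Q)"
  proof (rule sum.mono_neutral_right)
    show "finite ?P" by simp
    show "lft ` ?Q \<subseteq> ?P" using lft_permutes by auto
    show "\<forall>p\<in>?P - lft ` ?Q. ?f p = 0"
    proof
      fix p assume pp: "p \<in> ?P - lft ` ?Q"
      then have p: "p permutes UNIV" by simp
      show "?f p = 0"
      proof (cases "\<forall>j. p (Inr j) = Inr j")
        case False
        then obtain j where j: "p (Inr j) \<noteq> Inr j" by blast
        have "?M $ Inr j $ p (Inr j) = 0"
          using j by (cases "p (Inr j)") (auto simp: mat_def)
        then have "(\<Prod>i\<in>UNIV. ?M$i$p i) = 0" by (intro prod_zero) auto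
        then show ?thesis by simp
      next
        case True
        have inl: "\<exists>k. p (Inl i) = Inl k" for i
        proof (cases "p (Inl i)")
          case (Inr j) then have "p (Inl i) = p (Inr j)" using True by simp
          then show ?thesis using permutes_inj[OF p] by (auto dest: injD)
        qed auto
        define q where "q i = (case p (Inl i) of Inl k \<Rightarrow> k | Inr _ \<Rightarrow> i)" for i
        have pq: "p (Inl i) = Inl (q i)" for i using inl[of i] by (auto simp: q_def)
        have "inj q"
          by (rule injI) (metis pq permutes_inj[OF p] injD sum.inject(1))
        then have "bij q" using finite_UNIV_inj_surj[of q] by (simp add: bij_def)
        then have "q permutes UNIV" by (rule bij_imp_permutes) auto
        moreover have "lft q = p"
          by (rule ext) (metis True lft_Inl lft_Inr pq sum.exhaust)
        ultimately have "p \<in> lft ` ?Q" by auto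
        with pp show ?thesis by simp
      qed
    qed
  qed
  also have "\<dots> = sum (?f \<circ> lft) ?Q"
  proof (rule sum.reindex)
    show "inj_on lft ?Q"
      by (rule inj_onI) (metis ext lft_Inl sum.inject(1))
  qed
  also have "\<dots> = sum (\<lambda>q. of_int (sign q) * (\<Prod>i\<in>UNIV. A$i$q i)) ?Q"
  proof (rule sum.cong)
    fix q assume "q \<in> ?Q"
    then have q: "q permutes UNIV" by simp
    have "sign (lft q) = sign q"
      unfolding lft_def by (rule sign_map_permutation) (auto simp: q)
    then show "(?f \<circ> lft) q = of_int (sign q) * (\<Prod>i\<in>UNIV. A$i$q i)"
      by (simp add: prod_UNIV_Plus o_def mat_def)
  qed simp
  also have "\<dots> = det A" by (simp add: det_def)
  finally show ?thesis .
qed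

lemma det_blockdiag1':
  fixes B :: "'a::comm_ring_1^'n::finite^'n"
  shows "det (block (mat 1) 0 0 B) = det B"
proof -
  define s :: "'n+'n \<Rightarrow> 'n+'n" where "s x = (case x of Inl i \<Rightarrow> Inr i | Inr i \<Rightarrow> Inl i)" for x
  have ss: "s (s x) = x" for x by (cases x) (auto simp: s_def)
  have sp: "s permutes UNIV"
    by (rule bij_imp_permutes) (auto simp: bij_def inj_def surj_def, metis ss, metis ss)
  let ?N = "block (mat 1) 0 0 B :: 'a^('n+'n)^('n+'n)"
  have e: "(\<chi> i j. ?N $ s i $ s j) = block B 0 0 (mat 1)"
    by (simp add: vec_eq_iff block_def s_def split: sum.split)
  have "det (\<chi> i j. ?N $ s i $ s j) = of_int (sign s) * det (\<chi> i. ?N $ s i)"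
    using det_permute_columns[OF sp, of "\<chi> i. ?N $ s i"] by simp
  also have "\<dots> = of_int (sign s) * (of_int (sign s) * det ?N)"
    using det_permute_rows[OF sp, of ?N] by simp
  also have "\<dots> = det ?N"
    by (metis mult.assoc mult_1 of_int_1 of_int_mult sign_idempotent)
  finally show ?thesis using e det_blockdiag1 by metis
qed

lemma det_blockdiag:
  fixes A B :: "'a::comm_ring_1^'n::finite^'n"
  shows "det (block A 0 0 B) = det A * det B"
proof -
  have "block A 0 0 B = block A 0 0 (mat 1) ** block (mat 1) 0 0 B"
    by (simp add: block_mult)
  then show ?thesis by (simp add: det_mul det_blockdiag1 det_blockdiag1')
qed




lemma matrix_inv_props:
  assumes "invertible (g::'a::field^'n::finite^'n)"
  shows "g ** matrix_inv g = mat 1" "matrix_inv g ** g = mat 1"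
  using someI_ex[OF assms[unfolded invertible_def]] unfolding matrix_inv_def by auto

lemma matrix_inv_unique:
  assumes "(g::'a::field^'n::finite^'n) ** h = mat 1"
  shows "matrix_inv g = h"
proof -
  have i: "invertible g" using assms invertible_right_inverse by blast
  have "matrix_inv g = matrix_inv g ** (g ** h)" by (simp add: assms)
  also have "\<dots> = h" by (simp add: matrix_mul_assoc matrix_inv_props[OF i])
  finally show ?thesis .
qed

lemma Sp_I:
  assumes "det (block a b c d) = 1" "a ** transpose d - b ** transpose c = mat 1"
    "symmetric_mat (a ** transpose b)" "symmetric_mat (c ** transpose d)"
  shows "block a b c d \<in> Sp"
  unfolding Sp_def using assms by blast

lemma L_Sp: "symmetric_mat k \<Longrightarrow> (block (mat 1) 0 k (mat 1) :: 'a::field^('n::finite+'n)^('n+'n)) \<in> Sp"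
  by (rule Sp_I) (auto simp: det_L symmetric_mat_def)

lemma U_Sp: "symmetric_mat k \<Longrightarrow> (block (mat 1) k 0 (mat 1) :: 'a::field^('n::finite+'n)^('n+'n)) \<in> Sp"
  by (rule Sp_I) (auto simp: det_U symmetric_mat_def)

lemma H_Sp: "invertible g \<Longrightarrow> (block (matrix_inv g) 0 0 (transpose g) :: 'a::field^('n::finite+'n)^('n+'n)) \<in> Sp"
  by (rule Sp_I) (auto simp: det_blockdiag matrix_inv_props symmetric_mat_def simp flip: det_mul)

lemma S_sub_Sp:
  "set_mat_prod (set_mat_prod (set_mat_prod U_lower U_upper) U_lower) H_diag \<subseteq>
   (Sp :: (('a::field)^('n::finite+'n)^('n+'n)) set)"
  unfolding set_mat_prod_def U_lower_def U_upper_def H_diag_def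
  by (auto intro!: Sp_mult L_Sp U_Sp H_Sp)

lemma dot_mv:
  fixes A :: "'a::comm_ring_1^'n::finite^'m::finite"
  shows "(\<Sum>k\<in>UNIV. (A *v u)$k * v$k) = (\<Sum>j\<in>UNIV. u$j * (transpose A *v v)$j)"
  by (simp add: matrix_vector_mult_def transpose_def sum_distrib_left sum_distrib_right mult_ac)
     (rule sum.swap)

lemma kernel_subspace: "vec.subspace {w. (A::'a::field^'n::finite^'m::finite) *v w = 0}"
  unfolding vec.subspace_def
  by (auto simp: matrix_vector_right_distrib vec.scale)




lemma mv_diff: "((A::'a::ring_1^'n::finite^'m) - B) *v v = A *v v - B *v v"
  by (simp add: vec_eq_iff matrix_vector_mult_def sum_subtractf algebra_simps)

lemma crux:
  fixes b d :: "'a::field^'n::finite^'n"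
  assumes "transpose b ** d = transpose d ** b"
  and "\<And>w. b *v w = 0 \<Longrightarrow> d *v w = 0 \<Longrightarrow> w = 0"
  shows "\<exists>x. transpose x = x \<and> invertible (d - x ** b)"
  using assms
proof (induction "vec.dim {w. d *v w = 0}" arbitrary: d rule: less_induct)
  case less
  note iso = less.prems(1) and inj = less.prems(2)
  show ?case
  proof (cases "\<forall>w. d *v w = 0 \<longrightarrow> w = 0")
    case True
    then have "invertible d"
      by (simp add: invertible_left_inverse matrix_left_invertible_ker)
    then show ?thesis by (intro exI[of _ 0]) simp
  next
    case False
    then obtain w0 where w0: "d *v w0 = 0" "w0 \<noteq> 0" by blast
    have "b *v w0 \<noteq> 0" using inj w0 by blast
    then obtain i where i: "(b *v w0) $ i \<noteq> 0" by (auto simp: vec_eq_iff)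
    define s :: "'a^'n^'n" where "s = (\<chi> p q. if p = i \<and> q = i then 1 else 0)"
    have sT: "transpose s = s" by (auto simp: s_def transpose_def vec_eq_iff)
    have sv: "(s *v v) $ p = (if p = i then v $ i else 0)" for v p
      by (simp add: s_def matrix_vector_mult_def if_distrib if_distribR cong: if_cong)
    define d' where "d' = d - s ** b"
    have iso': "transpose b ** d' = transpose d' ** b"
      using iso by (simp add: d'_def mm_diff_l mm_diff_r tr_diff matrix_transpose_mul sT matrix_mul_assoc)
    have dw: "d *v w = d' *v w + s *v (b *v w)" for w
      by (simp add: d'_def mv_diff matrix_vector_mul_assoc)
    have inj': "w = 0" if "b *v w = 0" "d' *v w = 0" for w
    proof -
      have "s *v (b *v w) = 0" using that by (simp add: vec_eq_iff sv)
      then show ?thesis using inj that dw[of w] by simp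
    qed
    have isov: "(\<Sum>k\<in>UNIV. (b *v u)$k * (d *v v)$k) = (\<Sum>k\<in>UNIV. (d *v u)$k * (b *v v)$k)" for u v
      by (simp add: dot_mv matrix_vector_mul_assoc iso)
    have sub: "{w. d' *v w = 0} \<subset> {w. d *v w = 0}"
    proof
      show "{w. d' *v w = 0} \<subseteq> {w. d *v w = 0}"
      proof
        fix w assume "w \<in> {w. d' *v w = 0}"
        then have h: "d *v w = s *v (b *v w)" using dw[of w] by simp
        have "(\<Sum>k\<in>UNIV. (b *v w0)$k * (d *v w)$k) = 0"
          using isov[of w0 w] w0(1) by simp
        also have "(\<Sum>k\<in>UNIV. (b *v w0)$k * (d *v w)$k) = (b *v w0)$i * (b *v w)$i"
          unfolding h sv by (simp add: if_distrib cong: if_cong)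
        finally have "(b *v w)$i = 0" using i by simp
        then have "s *v (b *v w) = 0" by (simp add: vec_eq_iff sv)
        with h show "w \<in> {w. d *v w = 0}" by simp
      qed
      have "d' *v w0 = - (s *v (b *v w0))" using dw[of w0] w0(1)
        by (simp add: eq_neg_iff_add_eq_0)
      then have "(d' *v w0) $ i \<noteq> 0" using i by (simp add: sv)
      then have "w0 \<notin> {w. d' *v w = 0}" by auto
      then show "{w. d' *v w = 0} \<noteq> {w. d *v w = 0}" using w0(1) by blast
    qed
    have "vec.dim {w. d' *v w = 0} < vec.dim {w. d *v w = 0}"
      by (rule vec.dim_psubset) (use sub in \<open>simp add: vec.span_eq_iff[THEN iffD2, OF kernel_subspace]\<close>)
    from less.hyps[OF this iso' inj'] obtain x' where x': "transpose x' = x'" "invertible (d' - x' ** b)"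
      by blast
    have "d - (x' + s) ** b = d' - x' ** b" by (simp add: d'_def mm_add_r)
    then show ?thesis using x' sT by (intro exI[of _ "x' + s"]) (simp add: tr_add)
  qed
qed




lemma Sp_sub_S:
  assumes "(M :: ('a::field)^('n::finite+'n)^('n+'n)) \<in> Sp"
  shows "M \<in> set_mat_prod (set_mat_prod (set_mat_prod U_lower U_upper) U_lower) H_diag"
proof -
  obtain a b c d where M: "M = block a b c d" and R1: "a ** transpose d - b ** transpose c = mat 1"
    and R2: "symmetric_mat (a ** transpose b)" and R3: "symmetric_mat (c ** transpose d)"
    using assms unfolding Sp_def by blast
  have R2': "b ** transpose a = a ** transpose b" using R2 by (simp add: sym_iff)
  have R3': "d ** transpose c = c ** transpose d" using R3 by (simp add: sym_iff)
  have R2'': "X ** b ** transpose a = X ** a ** transpose b" for X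
    by (simp add: R2' flip: matrix_mul_assoc)
  have R3'': "X ** d ** transpose c = X ** c ** transpose d" for X
    by (simp add: R3' flip: matrix_mul_assoc)
  have R1': "d ** transpose a - c ** transpose b = mat 1"
    using arg_cong[OF R1, of transpose] by (simp add: tr_diff matrix_transpose_mul)
  define P where "P = block (transpose d) (- transpose b) (- transpose c) (transpose a)"
  have "M ** P = mat 1"
    unfolding M P_def block_mult block_mat1 block_eq_iff
    using R1 R1' R2' R3' by (simp add: mm_neg_r algebra_simps)
  then have "P ** M = mat 1" by (simp add: matrix_left_right_inverse)
  then have "block (transpose d ** a - transpose b ** c) (transpose d ** b - transpose b ** d)
     (transpose a ** c - transpose c ** a) (transpose a ** d - transpose c ** b) = block (mat 1) 0 0 (mat 1)"
    unfolding M P_def block_mult block_mat1 by (simp add: mm_neg_l algebra_simps)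
  then have C1: "transpose d ** a - transpose b ** c = mat 1"
    and C2: "transpose d ** b = transpose b ** d"
    and C4: "transpose a ** d - transpose c ** b = mat 1"
    unfolding block_eq_iff by auto
  have inj: "w = 0" if "b *v w = 0" "d *v w = 0" for w
  proof -
    have "w = (transpose a ** d - transpose c ** b) *v w" using C4 by simp
    also have "\<dots> = 0" using that by (simp add: mv_diff flip: matrix_vector_mul_assoc)
    finally show ?thesis .
  qed
  obtain x where xT: "transpose x = x" and Dinv: "invertible (d - x ** b)"
    using crux[of b d] C2 inj by metis
  define D where "D = d - x ** b"
  define Di where "Di = matrix_inv D"
  have DDi: "D ** Di = mat 1" "Di ** D = mat 1"
    using matrix_inv_props[OF Dinv] by (simp_all add: D_def Di_def)
  have TDDi: "transpose D ** transpose Di = mat 1" "transpose Di ** transpose D = mat 1"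
    using DDi by (simp_all flip: matrix_transpose_mul)
  have DDi': "X ** D ** Di = X" "X ** Di ** D = X" "X ** transpose D ** transpose Di = X"
     "X ** transpose Di ** transpose D = X" for X
    by (simp_all add: DDi TDDi flip: matrix_mul_assoc)
  define C' where "C' = c - x ** a"
  define y where "y = b ** Di"
  define z where "z = C' ** transpose D"
  have TD: "transpose D = transpose d - transpose b ** x"
    by (simp add: D_def tr_diff matrix_transpose_mul xT)
  have E1: "transpose D ** b = transpose b ** D"
    unfolding TD unfolding D_def using C2 by (simp add: mm_diff_l mm_diff_r matrix_mul_assoc)
  have E2: "transpose D ** a - transpose b ** C' = mat 1"
    unfolding TD C'_def using C1 by (simp add: mm_diff_l mm_diff_r matrix_mul_assoc)
  have E3: "transpose Di ** transpose b = b ** Di"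
  proof -
    have "transpose Di ** transpose b = transpose Di ** transpose b ** D ** Di" by (simp add: DDi')
    also have "\<dots> = transpose Di ** (transpose b ** D) ** Di" by (simp add: matrix_mul_assoc)
    also have "\<dots> = transpose Di ** (transpose D ** b) ** Di" by (simp add: E1)
    also have "\<dots> = b ** Di" by (simp add: matrix_mul_assoc TDDi)
    finally show ?thesis .
  qed
  have E4: "a = transpose Di + b ** Di ** C'"
  proof -
    have "transpose D ** a = mat 1 + transpose b ** C'" using E2 by (simp add: algebra_simps)
    then have "transpose Di ** (transpose D ** a) = transpose Di ** (mat 1 + transpose b ** C')" by simp
    then show ?thesis by (simp add: matrix_mul_assoc TDDi matrix_add_ldistrib E3)
  qed
  have E5: "D ** transpose C' = C' ** transpose D"
  proof -
    have "D ** transpose C' - C' ** transpose D =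
      (c ** transpose b - d ** transpose a) ** x + x ** (a ** transpose d - b ** transpose c)"
      unfolding D_def C'_def TD[unfolded D_def]
      by (simp add: tr_diff matrix_transpose_mul xT mm_diff_l mm_diff_r matrix_add_ldistrib mm_add_r
          matrix_mul_assoc R2' R3' R2'' R3'' algebra_simps)
    also have "\<dots> = 0"
    proof -
      have "c ** transpose b - d ** transpose a = - mat 1" using R1' by (metis minus_diff_eq)
      then show ?thesis using R1 by (simp add: mm_neg_l)
    qed
    finally show ?thesis by simp
  qed
  have ysym: "symmetric_mat y"
    unfolding symmetric_mat_def y_def by (simp add: matrix_transpose_mul E3)
  have zsym: "symmetric_mat z"
    unfolding symmetric_mat_def z_def by (simp add: matrix_transpose_mul E5)
  have xsym: "symmetric_mat x" using xT by (simp add: symmetric_mat_def)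
  have ginv: "invertible (transpose D)" using Dinv by (simp add: D_def invertible_det_nz)
  have gi: "matrix_inv (transpose D) = transpose Di" by (rule matrix_inv_unique) (simp add: TDDi)
  have prod: "block (mat 1) 0 x (mat 1) ** block (mat 1) y 0 (mat 1) ** block (mat 1) 0 z (mat 1)
     ** block (matrix_inv (transpose D)) 0 0 (transpose (transpose D))
     = block ((mat 1 + y ** z) ** transpose Di) (y ** D) ((x + (x ** y + mat 1) ** z) ** transpose Di)
          ((x ** y + mat 1) ** D)"
    by (simp add: block_mult gi)
  have b1: "(mat 1 + y ** z) ** transpose Di = a"
    unfolding E4 y_def z_def by (simp add: mm_add_r matrix_mul_assoc DDi')
  have b2: "y ** D = b" unfolding y_def by (simp add: DDi')
  have "(x ** y + mat 1) ** D = x ** b + D" unfolding y_def by (simp add: mm_add_r matrix_mul_assoc DDi')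
  then have b3: "(x ** y + mat 1) ** D = d" by (simp add: D_def)
  have b4: "(x + (x ** y + mat 1) ** z) ** transpose Di = c"
  proof -
    have "(x + (x ** y + mat 1) ** z) ** transpose Di = x ** (transpose Di + b ** Di ** C') + C'"
      unfolding y_def z_def
      by (simp add: mm_add_r matrix_add_ldistrib matrix_mul_assoc DDi' algebra_simps)
    also have "\<dots> = x ** a + C'" by (simp flip: E4)
    also have "\<dots> = c" by (simp add: C'_def)
    finally show ?thesis .
  qed
  have "M = block (mat 1) 0 x (mat 1) ** block (mat 1) y 0 (mat 1) ** block (mat 1) 0 z (mat 1)
     ** block (matrix_inv (transpose D)) 0 0 (transpose (transpose D))"
    unfolding prod b1 b2 b3 b4 M ..
  then show ?thesis
    unfolding set_mat_prod_def U_lower_def U_upper_def H_diag_def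
    using xsym ysym zsym ginv by blast
qed

theorem lemma4p1:
  shows "(Sp :: (('a::field)^('n::finite+'n)^('n+'n)) set) =
    set_mat_prod (set_mat_prod (set_mat_prod U_lower U_upper) U_lower) H_diag"
  using Sp_sub_S S_sub_Sp by blast


end
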